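(* Let $\kappa>0$, $u_0>0$, and consider the sessile liquid channel with parameter $u_0$ and contact angle $\gamma\in(0,\pi/2]$ resting on $\Pi$, with volume $\mathcal V(\gamma)$. Then $$\mathcal V(\gamma)>\frac{\gamma-\sin\gamma\cos\gamma}{\kappa^2u(\gamma)^2}.$$
   Context: For $u_0>0$, $(r(\psi),u(\psi))$, $\psi\in[0,\pi]$, is the solution of $\frac{dr}{d\psi}=\frac{\cos\psi}{\kappa u}$, $\frac{du}{d\psi}=\frac{\sin\psi}{\kappa u}$, $r(0)=0$, $u(0)=u_0$ (profile of a $\kappa$-cylindrical surface parametrized by inclination angle). The channel with contact angle $\gamma$ is the arc $\psi\in[0,\gamma]$ reflected in $r\mapsto-r$, resting on the line $u=u(\gamma)$; its volume per unit length is $\mathcal V(\gamma)=2\big(r(\gamma)u(\gamma)-\frac{\sin\gamma}\kappa\big)$. *)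

theory Defs
  imports Complex_Main
begin

definition kappa_profile :: "real \<Rightarrow> real \<Rightarrow> (real \<Rightarrow> real) \<Rightarrow> (real \<Rightarrow> real) \<Rightarrow> bool" where
  "kappa_profile \<kappa> u0 r u \<longleftrightarrow>
     r 0 = 0 \<and> u 0 = u0 \<and>
     (\<forall>\<psi>\<in>{0..pi}. (r has_real_derivative cos \<psi> / (\<kappa> * u \<psi>)) (at \<psi> within {0..pi}) \<and>
                   (u has_real_derivative sin \<psi> / (\<kappa> * u \<psi>)) (at \<psi> within {0..pi}))"

text \<open>Volume per unit length of the channel with contact angle gamma.\<close>
definition channel_volume :: "real \<Rightarrow> (real \<Rightarrow> real) \<Rightarrow> (real \<Rightarrow> real) \<Rightarrow> real \<Rightarrow> real" where
  "channel_volume \<kappa> r u \<gamma> = 2 * (r \<gamma> * u \<gamma> - sin \<gamma> / \<kappa>)"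

end

theory Submission
  imports Defs "HOL-Analysis.Analysis"
begin

lemma pos_incr:
  fixes f f' :: "real \<Rightarrow> real"
  assumes "a < b" "continuous_on {a..b} f"
    and "\<And>x. a < x \<Longrightarrow> x < b \<Longrightarrow> (f has_real_derivative f' x) (at x) \<and> f' x > 0"
  shows "f a < f b"
proof -
  obtain l z where z: "a < z" "z < b" "DERIV f z :> l" "f b - f a = (b - a) * l"
    using MVT[OF assms(1,2)] assms(3) real_differentiable_def by meson
  have "l = f' z" using z assms(3) DERIV_unique by blast
  then have "l > 0" using z assms(3) by auto
  then show ?thesis using z assms(1) by (smt (verit) mult_pos_pos)
qed

lemma interior_at:
  assumes "0 < x" "x < pi"
    and "(f has_real_derivative D) (at x within {0..pi})"
  shows "(f has_real_derivative D) (at x)"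
  using assms at_within_interior[of x "{0..pi}"] by simp

theorem mainTheorem14:
  fixes \<kappa> u0 \<gamma> :: real and r u :: "real \<Rightarrow> real"
  assumes "\<kappa> > 0" and "u0 > 0"
    and "kappa_profile \<kappa> u0 r u"
    and "0 < \<gamma>" and "\<gamma> \<le> pi / 2"
  shows "channel_volume \<kappa> r u \<gamma> > (\<gamma> - sin \<gamma> * cos \<gamma>) / (\<kappa>^2 * (u \<gamma>)^2)"
proof -
  define S where "S = {0..pi}"
  have r0: "r 0 = 0" and u0: "u 0 = u0" using assms(3) unfolding kappa_profile_def by auto
  have dr: "\<And>x. x \<in> S \<Longrightarrow> (r has_real_derivative cos x / (\<kappa> * u x)) (at x within S)"
    and du: "\<And>x. x \<in> S \<Longrightarrow> (u has_real_derivative sin x / (\<kappa> * u x)) (at x within S)"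
    using assms(3) unfolding kappa_profile_def S_def by auto
  have contu: "continuous_on S u"
    using du continuous_on_eq_continuous_within DERIV_continuous by blast
  have contr: "continuous_on S r"
    using dr continuous_on_eq_continuous_within DERIV_continuous by blast
  define Q where "Q x = (u x)^2 + 2 * cos x / \<kappa>" for x
  have contQ: "continuous_on S Q" unfolding Q_def
    by (intro continuous_intros contu) (use assms(1) in auto)
  have Qconst: "Q b = Q 0" if b: "b \<in> S" "\<And>s. 0 \<le> s \<Longrightarrow> s < b \<Longrightarrow> u s > 0" for b
  proof (cases "b = 0")
    case False
    then have "0 < b" using b S_def by auto
    show ?thesis
    proof (rule DERIV_isconst_end[OF \<open>0 < b\<close>])
      show "continuous_on {0..b} Q"
        by (rule continuous_on_subset[OF contQ]) (use b(1) in \<open>auto simp: S_def\<close>)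
      fix x assume x: "0 < x" "x < b"
      have xS: "x \<in> S" "0 < x" "x < pi" using x b(1) S_def by auto
      have "u x > 0" using b(2) x by auto
      have d: "(u has_real_derivative sin x / (\<kappa> * u x)) (at x)"
        using interior_at xS du[OF xS(1)] S_def by blast
      have "(Q has_real_derivative 2 * u x * (sin x / (\<kappa> * u x)) + 2 * (- sin x) / \<kappa>) (at x)"
        unfolding Q_def using assms(1) \<open>u x > 0\<close>
        by (auto intro!: derivative_eq_intros d simp: power2_eq_square)
      moreover have "2 * u x * (sin x / (\<kappa> * u x)) + 2 * (- sin x) / \<kappa> = 0"
        using \<open>u x > 0\<close> assms(1) by (simp add: field_simps)
      ultimately show "DERIV Q x :> 0" by simp
    qed
  qed simp
  have upos: "u x > 0" if xS0: "x \<in> S" for x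
  proof (rule ccontr)
    assume "\<not> u x > 0"
    have "\<exists>z. 0 \<le> z \<and> z \<le> x \<and> - u z = 0"
      apply (rule IVT')
      using \<open>\<not> u x > 0\<close> u0 assms(2) that S_def apply auto[3]
      using contu that unfolding S_def
      by (intro continuous_intros) (auto elim: continuous_on_subset)
    then obtain z where z: "z \<in> S" "u z = 0" using xS0 unfolding S_def by force
    define Z where "Z = {y \<in> S. u y = 0}"
    have "closed Z" unfolding Z_def
      using continuous_closed_preimage_constant[OF contu] S_def by auto
    moreover have "Z \<noteq> {}" using z Z_def by auto
    moreover have bZ: "bdd_below Z" unfolding Z_def S_def by (rule bdd_belowI[of _ 0]) auto
    ultimately have tZ: "Inf Z \<in> Z" using closed_contains_Inf by blast
    define t where "t = Inf Z"
    have tS: "t \<in> S" "u t = 0" using tZ t_def Z_def by auto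
    have below: "u s > 0" if s: "0 \<le> s" "s < t" for s
    proof (rule ccontr)
      assume "\<not> u s > 0"
      have "\<exists>z. 0 \<le> z \<and> z \<le> s \<and> - u z = 0"
        apply (rule IVT')
        using \<open>\<not> u s > 0\<close> u0 assms(2) s apply auto[3]
        using contu s tS(1) unfolding S_def
        by (intro continuous_intros) (auto elim: continuous_on_subset)
      then obtain w where w: "0 \<le> w" "w \<le> s" "u w = 0" by auto
      then have "w \<in> Z" using tS s unfolding Z_def S_def by auto
      then have "t \<le> w" using cInf_lower[OF _ bZ] t_def by auto
      then show False using w s by auto
    qed
    have "Q t = Q 0" using Qconst[OF tS(1) below] by auto
    then have "2 * cos t / \<kappa> = u0^2 + 2 / \<kappa>" using tS u0 unfolding Q_def by simp
    moreover have "2 * cos t / \<kappa> \<le> 2 / \<kappa>" using assms(1) by (simp add: divide_right_mono)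
    ultimately show False using assms(2) by (smt (verit) zero_less_power)
  qed
  have Qall: "Q x = Q 0" if "x \<in> S" for x
    using Qconst[OF that] upos S_def that by auto
  have usq: "(u x)^2 = u0^2 + 2 * (1 - cos x) / \<kappa>" if "x \<in> S" for x
    using Qall[OF that] u0 unfolding Q_def by (simp add: diff_divide_distrib)
  have gS: "\<gamma> \<in> S" "\<gamma> < pi" using assms(4,5) pi_gt_zero unfolding S_def by auto
  define U where "U = u \<gamma>"
  have Upos: "U > 0" using upos gS U_def by auto
  have Gpos: "r x > sin x / (\<kappa> * u x)" if x: "0 < x" "x \<le> \<gamma>" for x
  proof -
    define G where "G y = r y - sin y / (\<kappa> * u y)" for y
    have sub: "{0..x} \<subseteq> S" using x gS unfolding S_def by auto
    have "G 0 < G x"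
    proof (rule pos_incr[where f=G and b=x and a=0 and f' = "\<lambda>y. (sin y)^2 / (\<kappa>^2 * (u y)^3)"])
      show "0 < x" by fact
      show "continuous_on {0..x} G" unfolding G_def
        using sub upos assms(1)
        by (intro continuous_intros continuous_on_subset[OF contr sub] continuous_on_subset[OF contu sub])
           (auto, metis atLeastAtMost_iff less_irrefl subsetD)
      fix y assume y: "0 < y" "y < x"
      have yS: "y \<in> S" "y < pi" using y x gS unfolding S_def by auto
      have uy: "u y > 0" using upos yS by auto
      have d1: "(u has_real_derivative sin y / (\<kappa> * u y)) (at y)"
        using interior_at y yS du[OF yS(1)] S_def by auto
      have d2: "(r has_real_derivative cos y / (\<kappa> * u y)) (at y)"
        using interior_at y yS dr[OF yS(1)] S_def by auto
      have "(G has_real_derivative (cos y / (\<kappa> * u y)) - (cos y * (\<kappa> * u y) - sin y * (\<kappa> * (sin y / (\<kappa> * u y)))) / (\<kappa> * u y)^2) (at y)"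
        unfolding G_def using uy assms(1)
        by (auto intro!: derivative_eq_intros d1 d2 simp: power2_eq_square)
      moreover have "(cos y / (\<kappa> * u y)) - (cos y * (\<kappa> * u y) - sin y * (\<kappa> * (sin y / (\<kappa> * u y)))) / (\<kappa> * u y)^2
          = (sin y)^2 / (\<kappa>^2 * (u y)^3)"
        using uy assms(1) by (simp add: field_simps power2_eq_square power3_eq_cube)
      moreover have "sin y > 0" using y yS sin_gt_zero by auto
      ultimately show "(G has_real_derivative (sin y)^2 / (\<kappa>^2 * (u y)^3)) (at y) \<and> (sin y)^2 / (\<kappa>^2 * (u y)^3) > 0"
        using uy assms(1) by auto
    qed
    then show ?thesis using r0 unfolding G_def by simp
  qed
  define H where "H x = 2 * (r x * u x - sin x / \<kappa>) - (x - sin x * cos x) / (\<kappa>^2 * U^2)" for x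
  have "H 0 < H \<gamma>"
  proof (rule pos_incr[where f=H and b=\<gamma> and a=0 and f' = "\<lambda>y. 2 * (r y * sin y / (\<kappa> * u y)) - 2 * (sin y)^2 / (\<kappa>^2 * U^2)"])
    show "0 < \<gamma>" by fact
    have sub: "{0..\<gamma>} \<subseteq> S" using gS unfolding S_def by auto
    show "continuous_on {0..\<gamma>} H" unfolding H_def
      using sub upos assms(1) Upos
      by (intro continuous_intros continuous_on_subset[OF contr sub] continuous_on_subset[OF contu sub])
         auto
    fix y assume y: "0 < y" "y < \<gamma>"
    have yS: "y \<in> S" "y < pi" using y gS unfolding S_def by auto
    have uy: "u y > 0" using upos yS by auto
    have d1: "(u has_real_derivative sin y / (\<kappa> * u y)) (at y)"
      using interior_at y yS du[OF yS(1)] S_def by auto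
    have d2: "(r has_real_derivative cos y / (\<kappa> * u y)) (at y)"
      using interior_at y yS dr[OF yS(1)] S_def by auto
    have dH: "(H has_real_derivative 2 * (cos y / (\<kappa> * u y) * u y + r y * (sin y / (\<kappa> * u y)) - cos y / \<kappa>)
        - (1 - (cos y * cos y - sin y * sin y)) / (\<kappa>^2 * U^2)) (at y)"
      unfolding H_def using uy assms(1) Upos
      by (auto intro!: derivative_eq_intros d1 d2 simp: power2_eq_square mult_ac)
    moreover have eqH: "2 * (cos y / (\<kappa> * u y) * u y + r y * (sin y / (\<kappa> * u y)) - cos y / \<kappa>)
        - (1 - (cos y * cos y - sin y * sin y)) / (\<kappa>^2 * U^2)
        = 2 * (r y * sin y / (\<kappa> * u y)) - 2 * (sin y)^2 / (\<kappa>^2 * U^2)"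
    proof -
      have "1 - (cos y * cos y - sin y * sin y) = 2 * (sin y)^2"
        using sin_cos_squared_add[of y] by (simp add: power2_eq_square)
      then show ?thesis using uy assms(1) by (simp add: field_simps)
    qed
    moreover have posH: "2 * (r y * sin y / (\<kappa> * u y)) - 2 * (sin y)^2 / (\<kappa>^2 * U^2) > 0"
    proof -
      have sy: "sin y > 0" using y yS sin_gt_zero by auto
      have g: "r y > sin y / (\<kappa> * u y)" using Gpos y by auto
      have "cos \<gamma> \<le> cos y" using y gS by (intro cos_monotone_0_pi_le) auto
      then have "(u y)^2 \<le> U^2" using usq[OF yS(1)] usq[OF gS(1)] U_def assms(1)
        by (simp add: divide_right_mono)
      then have "(sin y)^2 / (\<kappa>^2 * U^2) \<le> (sin y)^2 / (\<kappa>^2 * (u y)^2)"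
        using uy assms(1) Upos by (intro divide_left_mono mult_left_mono) auto
      also have "\<dots> = (sin y / (\<kappa> * u y)) * (sin y / (\<kappa> * u y))"
        by (simp add: power2_eq_square)
      also have "\<dots> < r y * (sin y / (\<kappa> * u y))"
        using g sy uy assms(1) by (intro mult_strict_right_mono) auto
      finally show ?thesis by simp
    qed
    ultimately show "(H has_real_derivative 2 * (r y * sin y / (\<kappa> * u y)) - 2 * (sin y)^2 / (\<kappa>^2 * U^2)) (at y)
       \<and> 2 * (r y * sin y / (\<kappa> * u y)) - 2 * (sin y)^2 / (\<kappa>^2 * U^2) > 0"
      using dH posH unfolding eqH by blast
  qed
  moreover have "H 0 = 0" unfolding H_def using r0 by simp
  ultimately show ?thesis using r0 unfolding H_def channel_volume_def U_def by (simp add: right_diff_distrib)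
qed

end
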